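(* Let $s\in\{+2,-2\}$ and let $\Psi$ be a smooth spin-$s$-weighted function satisfying $\mathfrak R^{[s]}\Psi=0$. Then, with $\mathcal L=\mathcal L^{[s]}$, $$(w^{-1}\underline L)(w^{-1}\underline L)\,w^2\,(w^{-1}L)(w^{-1}L)\Psi=\big(\mathcal L(\mathcal L-2)-12M\partial_t\big)\Psi,$$ $$(w^{-1}L)(w^{-1}L)\,w^2\,(w^{-1}\underline L)(w^{-1}\underline L)\Psi=\big(\mathcal L(\mathcal L-2)+12M\partial_t\big)\Psi.$$
   Context: Fix $M>0$, $k>0$; $\Delta(r)=r^2+k^2r^4-2Mr$, $w:=\Delta/r^4$. On the Schwarzschild–AdS exterior with metric $-(1+k^2r^2-\frac{2M}{r})dt^2+(1+k^2r^2-\frac{2M}{r})^{-1}dr^2+r^2(d\vartheta^2+\sin^2\vartheta d\varphi^2)$, let $r^\star$ be given by $dr^\star/dr=r^2/\Delta$, $r^\star(\infty)=\pi/2$; $L=\partial_t+\partial_{r^\star}$, $\underline L=\partial_t-\partial_{r^\star}$; $(w^{-1}L)$ denotes $\phi\mapsto w^{-1}L\phi$, $w^2$ denotes multiplication by $w^2$, and products denote compositions. $-\mathcal{L}^{[\pm2]}:=\frac{1}{\sin\vartheta}\partial_\vartheta(\sin\vartheta\partial_\vartheta)+\frac{1}{\sin^2\vartheta}\partial_\varphi^2\pm4i\frac{\cos\vartheta}{\sin^2\vartheta}\partial_\varphi-4\cot^2\vartheta-4$ on spin $\pm2$ functions. Regge–Wheeler operators: $\mathfrak R^{[\pm2]}\Psi=-L\underline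 L\Psi-w(\mathcal L^{[\pm2]}-\frac{6M}{r})\Psi$. *)

theory Defs
  imports "HOL-Analysis.Analysis"
begin

text \<open>Points of the exterior are written in Boyer--Lindquist-type coordinates
  (t, r, theta, phi).  Functions are complex valued (spin-weighted functions in
  the coordinate frame).\<close>

type_synonym point = "real \<times> real \<times> real \<times> real"

definition Delta :: "real \<Rightarrow> real \<Rightarrow> real \<Rightarrow> real" where
  "Delta M k r = r^2 + k^2 * r^4 - 2 * M * r"

definition w :: "real \<Rightarrow> real \<Rightarrow> real \<Rightarrow> real" where
  "w M k r = Delta M k r / r^4"

text \<open>The exterior region: r > r_+ (equivalently r > 0 and Delta(r) > 0),
  0 < theta < pi.\<close>
definition exterior :: "real \<Rightarrow> real \<Rightarrow> point set" where
  "exterior M k = {(t, r, th, ph). 0 < r \<and> 0 < Delta M k r \<and> 0 < th \<and> th < pi}"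

definition dd :: "point \<Rightarrow> (point \<Rightarrow> complex) \<Rightarrow> point \<Rightarrow> complex" where
  "dd v f x = vector_derivative (\<lambda>h. f (x + h *\<^sub>R v)) (at 0)"

fun iter_dd :: "point list \<Rightarrow> (point \<Rightarrow> complex) \<Rightarrow> point \<Rightarrow> complex" where
  "iter_dd [] f = f"
| "iter_dd (v # vs) f = dd v (iter_dd vs f)"

definition smooth_on :: "point set \<Rightarrow> (point \<Rightarrow> complex) \<Rightarrow> bool" where
  "smooth_on U f \<longleftrightarrow> (\<forall>vs. iter_dd vs f differentiable_on U)"

definition dt :: "(point \<Rightarrow> complex) \<Rightarrow> point \<Rightarrow> complex" where
  "dt f = dd (1, 0, 0, 0) f"
definition dr :: "(point \<Rightarrow> complex) \<Rightarrow> point \<Rightarrow> complex" where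
  "dr f = dd (0, 1, 0, 0) f"
definition dth :: "(point \<Rightarrow> complex) \<Rightarrow> point \<Rightarrow> complex" where
  "dth f = dd (0, 0, 1, 0) f"
definition dph :: "(point \<Rightarrow> complex) \<Rightarrow> point \<Rightarrow> complex" where
  "dph f = dd (0, 0, 0, 1) f"

text \<open>d/dr* = (Delta / r^2) d/dr, since dr*/dr = r^2/Delta.\<close>
definition drstar :: "real \<Rightarrow> real \<Rightarrow> (point \<Rightarrow> complex) \<Rightarrow> point \<Rightarrow> complex" where
  "drstar M k f = (\<lambda>(t, r, th, ph). of_real (Delta M k r / r^2) * dr f (t, r, th, ph))"

definition Lop :: "real \<Rightarrow> real \<Rightarrow> (point \<Rightarrow> complex) \<Rightarrow> point \<Rightarrow> complex" where
  "Lop M k f = (\<lambda>x. dt f x + drstar M k f x)"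

definition Lbar :: "real \<Rightarrow> real \<Rightarrow> (point \<Rightarrow> complex) \<Rightarrow> point \<Rightarrow> complex" where
  "Lbar M k f = (\<lambda>x. dt f x - drstar M k f x)"

definition mul_r :: "(real \<Rightarrow> real) \<Rightarrow> (point \<Rightarrow> complex) \<Rightarrow> point \<Rightarrow> complex" where
  "mul_r g f = (\<lambda>(t, r, th, ph). of_real (g r) * f (t, r, th, ph))"

definition winvL :: "real \<Rightarrow> real \<Rightarrow> (point \<Rightarrow> complex) \<Rightarrow> point \<Rightarrow> complex" where
  "winvL M k f = mul_r (\<lambda>r. 1 / w M k r) (Lop M k f)"

definition winvLbar :: "real \<Rightarrow> real \<Rightarrow> (point \<Rightarrow> complex) \<Rightarrow> point \<Rightarrow> complex" where
  "winvLbar M k f = mul_r (\<lambda>r. 1 / w M k r) (Lbar M k f)"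

text \<open>The angular operator \<L>^[s] for s = +2 or -2 (the term \<plusminus>4i becomes 2 s i).\<close>
definition angL :: "int \<Rightarrow> (point \<Rightarrow> complex) \<Rightarrow> point \<Rightarrow> complex" where
  "angL s f = (\<lambda>(t, r, th, ph).
     - ( of_real (1 / sin th) * dth (\<lambda>(t', r', th', ph'). of_real (sin th') * dth f (t', r', th', ph')) (t, r, th, ph)
       + of_real (1 / (sin th)^2) * dph (dph f) (t, r, th, ph)
       + of_int (2 * s) * \<i> * of_real (cos th / (sin th)^2) * dph f (t, r, th, ph)
       - of_real (4 * (cot th)^2) * f (t, r, th, ph)
       - 4 * f (t, r, th, ph)))"

definition RW :: "real \<Rightarrow> real \<Rightarrow> int \<Rightarrow> (point \<Rightarrow> complex) \<Rightarrow> point \<Rightarrow> complex" where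
  "RW M k s f = (\<lambda>(t, r, th, ph).
     - Lop M k (Lbar M k f) (t, r, th, ph)
     - of_real (w M k r) * (angL s f (t, r, th, ph) - of_real (6 * M / r) * f (t, r, th, ph)))"

end

theory Submission
  imports Defs
begin

lemma dd_at:
  assumes "(f has_derivative F) (at y)"
  shows "dd v f y = F v"
proof -
  have "((\<lambda>h. y + h *\<^sub>R v) has_derivative (\<lambda>h. h *\<^sub>R v)) (at 0)"
    by (auto intro!: derivative_eq_intros)
  moreover have "(f has_derivative F) (at (y + 0 *\<^sub>R v))" using assms by simp
  ultimately have "((\<lambda>h. f (y + h *\<^sub>R v)) has_derivative (\<lambda>h. F (h *\<^sub>R v))) (at 0)"
    using has_derivative_compose[of "\<lambda>h. y + h *\<^sub>R v"] by (metis (no_types) o_def)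
  moreover have "(\<lambda>h. F (h *\<^sub>R v)) = (\<lambda>h. h *\<^sub>R F v)"
    using linear_scale[OF has_derivative_linear[OF assms]] by auto
  ultimately have "((\<lambda>h. f (y + h *\<^sub>R v)) has_vector_derivative F v) (at 0)"
    by (simp add: has_vector_derivative_def)
  then show ?thesis unfolding dd_def by (rule vector_derivative_at)
qed

lemma dd_vd:
  assumes "f differentiable (at (p + s *\<^sub>R v))"
  shows "((\<lambda>s. f (p + s *\<^sub>R v)) has_vector_derivative dd v f (p + s *\<^sub>R v)) (at s)"
proof -
  obtain F where F: "(f has_derivative F) (at (p + s *\<^sub>R v))"
    using assms unfolding differentiable_def by blast
  have "((\<lambda>h. p + h *\<^sub>R v) has_derivative (\<lambda>h. h *\<^sub>R v)) (at s)"
    by (auto intro!: derivative_eq_intros)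
  then have "((\<lambda>h. f (p + h *\<^sub>R v)) has_derivative (\<lambda>h. F (h *\<^sub>R v))) (at s)"
    using has_derivative_compose[of "\<lambda>h. p + h *\<^sub>R v", OF _ F] by (metis (no_types) o_def)
  moreover have "(\<lambda>h. F (h *\<^sub>R v)) = (\<lambda>h. h *\<^sub>R F v)"
    using linear_scale[OF has_derivative_linear[OF F]] by auto
  ultimately show ?thesis using dd_at[OF F, of v]
    by (simp add: has_vector_derivative_def)
qed

lemma dd_local:
  assumes "open U" "x \<in> U" "\<And>y. y \<in> U \<Longrightarrow> f y = g y"
  shows "dd v f x = dd v g x"
proof -
  have "open ((\<lambda>h::real. x + h *\<^sub>R v) -` U)"
    by (rule continuous_open_vimage[OF assms(1)]) (auto intro!: continuous_intros)
  then have "open {h::real. x + h *\<^sub>R v \<in> U}" by (simp add: vimage_def)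
  moreover have "0 \<in> {h::real. x + h *\<^sub>R v \<in> U}" using assms by simp
  ultimately have "eventually (\<lambda>h. h \<in> {h::real. x + h *\<^sub>R v \<in> U}) (nhds (0::real))"
    by (rule eventually_nhds_in_open)
  then have "eventually (\<lambda>h. x + h *\<^sub>R v \<in> U) (nhds (0::real))" by simp
  then have "eventually (\<lambda>h. h \<in> UNIV \<longrightarrow> f (x + h *\<^sub>R v) = g (x + h *\<^sub>R v)) (nhds (0::real))"
    by eventually_elim (use assms in auto)
  then show ?thesis unfolding dd_def
    by (rule vector_derivative_cong_eq) auto
qed

lemma dd_mult:
  assumes "f differentiable (at y)" "g differentiable (at y)"
  shows "dd v (\<lambda>z. f z * g z) y = dd v f y * g y + f y * dd v g y"
proof -
  obtain F G where F: "(f has_derivative F) (at y)" and G: "(g has_derivative G) (at y)"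
    using assms unfolding differentiable_def by blast
  have "((\<lambda>z. f z * g z) has_derivative (\<lambda>h. f y * G h + F h * g y)) (at y)"
    using has_derivative_mult[OF F G] .
  then show ?thesis using dd_at[OF F] dd_at[OF G] dd_at by (simp add: mult.commute)
qed

lemma dd_add:
  assumes "f differentiable (at y)" "g differentiable (at y)"
  shows "dd v (\<lambda>z. f z + g z) y = dd v f y + dd v g y"
proof -
  obtain F G where F: "(f has_derivative F) (at y)" and G: "(g has_derivative G) (at y)"
    using assms unfolding differentiable_def by blast
  show ?thesis using dd_at[OF has_derivative_add[OF F G]] dd_at[OF F] dd_at[OF G] by simp
qed

lemma dd_diff:
  assumes "f differentiable (at y)" "g differentiable (at y)"
  shows "dd v (\<lambda>z. f z - g z) y = dd v f y - dd v g y"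
proof -
  obtain F G where F: "(f has_derivative F) (at y)" and G: "(g has_derivative G) (at y)"
    using assms unfolding differentiable_def by blast
  show ?thesis using dd_at[OF has_derivative_diff[OF F G]] dd_at[OF F] dd_at[OF G] by simp
qed

lemma dd_minus:
  assumes "f differentiable (at y)"
  shows "dd v (\<lambda>z. - f z) y = - dd v f y"
proof -
  obtain F where F: "(f has_derivative F) (at y)"
    using assms unfolding differentiable_def by blast
  show ?thesis using dd_at[OF has_derivative_minus[OF F]] dd_at[OF F] by simp
qed

lemma dd_const: "dd v (\<lambda>z. c) y = 0"
  using dd_at[OF has_derivative_const] by simp

lemma dd_inverse:
  assumes "f differentiable (at y)" "f y \<noteq> 0"
  shows "dd v (\<lambda>z. inverse (f z)) y = - (inverse (f y) * dd v f y * inverse (f y))"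
proof -
  obtain F where F: "(f has_derivative F) (at y)"
    using assms unfolding differentiable_def by blast
  have "((\<lambda>z. inverse (f z)) has_derivative (\<lambda>h. - (inverse (f y) * F h * inverse (f y)))) (at y)"
    using Deriv.has_derivative_inverse[OF assms(2) F] by simp
  then show ?thesis using dd_at[OF F] dd_at by simp
qed

lemma dd_linear:
  assumes "bounded_linear (l :: point \<Rightarrow> real)"
  shows "dd v (\<lambda>z. complex_of_real (l z)) y = complex_of_real (l v)"
proof -
  have "((\<lambda>z. complex_of_real (l z)) has_derivative (\<lambda>h. complex_of_real (l h))) (at y)"
    by (rule bounded_linear.has_derivative[OF bounded_linear_of_real, OF bounded_linear.has_derivative[OF assms has_derivative_ident]])
  then show ?thesis by (rule dd_at)
qed


definition smo :: "point set \<Rightarrow> nat \<Rightarrow> (point \<Rightarrow> complex) \<Rightarrow> bool" where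
  "smo U n f \<longleftrightarrow> (\<forall>vs. length vs \<le> n \<longrightarrow> iter_dd vs f differentiable_on U)"

lemma iter_dd_append: "iter_dd (ws @ vs) f = iter_dd ws (iter_dd vs f)"
  by (induction ws) auto

lemma iter_local:
  assumes "open U" "\<And>y. y \<in> U \<Longrightarrow> f y = g y" "y \<in> U"
  shows "iter_dd vs f y = iter_dd vs g y"
  using assms(3)
proof (induction vs arbitrary: y)
  case Nil then show ?case using assms by simp
next
  case (Cons v vs)
  have "dd v (iter_dd vs f) y = dd v (iter_dd vs g) y"
    by (rule dd_local[OF assms(1) Cons.prems]) (rule Cons.IH)
  then show ?case by simp
qed

lemma diffon_cong:
  assumes "open U" "\<And>y. y \<in> U \<Longrightarrow> f y = g y" "g differentiable_on U"
  shows "f differentiable_on U"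
proof -
  { fix y assume y: "y \<in> U"
    then obtain G where "(g has_derivative G) (at y)"
      using assms(1,3) differentiable_on_eq_differentiable_at unfolding differentiable_def by blast
    then have "(f has_derivative G) (at y)"
      by (rule has_derivative_transform_within_open[OF _ assms(1) y]) (use assms(2) in auto)
    then have "f differentiable at y" unfolding differentiable_def by blast }
  then show ?thesis using differentiable_at_imp_differentiable_on by blast
qed

lemma diffon_at: "open U \<Longrightarrow> f differentiable_on U \<Longrightarrow> y \<in> U \<Longrightarrow> f differentiable at y"
  using differentiable_on_eq_differentiable_at by blast

lemma smo_cong:
  assumes "open U" "\<And>y. y \<in> U \<Longrightarrow> f y = g y" "smo U n g"
  shows "smo U n f"
  unfolding smo_def
proof (intro allI impI)
  fix vs :: "point list" assume "length vs \<le> n"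
  then have "iter_dd vs g differentiable_on U" using assms(3) unfolding smo_def by blast
  then show "iter_dd vs f differentiable_on U"
    by (rule diffon_cong[OF assms(1), rotated]) (rule iter_local[OF assms(1,2)])
qed

lemma smo_mono: "smo U n f \<Longrightarrow> m \<le> n \<Longrightarrow> smo U m f"
  unfolding smo_def by auto

lemma smo_diffon: "smo U n f \<Longrightarrow> f differentiable_on U"
  unfolding smo_def by (drule spec[of _ "[]"]) simp

lemma smo_dd: "smo U (Suc n) f \<Longrightarrow> smo U n (dd v f)"
  unfolding smo_def
proof (intro allI impI)
  fix vs :: "point list"
  assume a: "\<forall>vs. length vs \<le> Suc n \<longrightarrow> iter_dd vs f differentiable_on U" "length vs \<le> n"
  have "iter_dd (vs @ [v]) f differentiable_on U" using a by auto
  then show "iter_dd vs (dd v f) differentiable_on U" by (simp add: iter_dd_append)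
qed

lemma smo_SucI:
  assumes "f differentiable_on U" "\<And>v. smo U n (dd v f)"
  shows "smo U (Suc n) f"
  unfolding smo_def
proof (intro allI impI)
  fix vs :: "point list" assume l: "length vs \<le> Suc n"
  show "iter_dd vs f differentiable_on U"
  proof (cases vs rule: rev_exhaust)
    case Nil then show ?thesis using assms by simp
  next
    case (snoc ws v)
    then have "iter_dd ws (dd v f) differentiable_on U"
      using assms(2)[of v] l unfolding smo_def by auto
    then show ?thesis using snoc by (simp add: iter_dd_append)
  qed
qed

lemma smooth_smo: "smooth_on U f \<longleftrightarrow> (\<forall>n. smo U n f)"
  unfolding smooth_on_def smo_def
proof (intro iffI allI impI)
  fix vs :: "point list"
  assume "\<forall>n vs. length vs \<le> n \<longrightarrow> iter_dd vs f differentiable_on U"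
  then show "iter_dd vs f differentiable_on U" by (meson order_refl)
qed simp

lemma smo_const: "smo U n (\<lambda>y. c)"
proof (induction n arbitrary: c)
  case 0 then show ?case unfolding smo_def by simp
next
  case (Suc n)
  have "dd v (\<lambda>y. c) = (\<lambda>y. 0)" for v by (rule ext) (rule dd_const)
  with Suc show ?case
    by (intro smo_SucI) (auto intro!: derivative_intros simp: smo_def)
qed

lemma smo_add:
  assumes U: "open U"
  shows "smo U n f \<Longrightarrow> smo U n g \<Longrightarrow> smo U n (\<lambda>y. f y + g y)"
proof (induction n arbitrary: f g)
  case 0 then show ?case
    using smo_diffon unfolding smo_def by (auto intro!: derivative_intros)
next
  case (Suc n)
  show ?case
  proof (rule smo_SucI)
    show "(\<lambda>y. f y + g y) differentiable_on U"
      using Suc.prems smo_diffon by (auto intro!: derivative_intros)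
    fix v
    have "smo U n (\<lambda>y. dd v f y + dd v g y)"
      by (rule Suc.IH[OF smo_dd[OF Suc.prems(1)] smo_dd[OF Suc.prems(2)]])
    moreover have "dd v (\<lambda>y. f y + g y) y = dd v f y + dd v g y" if "y \<in> U" for y
      by (rule dd_add[OF diffon_at[OF U smo_diffon[OF Suc.prems(1)] that] diffon_at[OF U smo_diffon[OF Suc.prems(2)] that]])
    ultimately show "smo U n (dd v (\<lambda>y. f y + g y))"
      by (rule smo_cong[OF U, rotated])
  qed
qed

lemma smo_diff:
  assumes U: "open U"
  shows "smo U n f \<Longrightarrow> smo U n g \<Longrightarrow> smo U n (\<lambda>y. f y - g y)"
proof (induction n arbitrary: f g)
  case 0 then show ?case
    using smo_diffon unfolding smo_def by (auto intro!: derivative_intros)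
next
  case (Suc n)
  show ?case
  proof (rule smo_SucI)
    show "(\<lambda>y. f y - g y) differentiable_on U"
      using Suc.prems smo_diffon by (auto intro!: derivative_intros)
    fix v
    have "smo U n (\<lambda>y. dd v f y - dd v g y)"
      by (rule Suc.IH[OF smo_dd[OF Suc.prems(1)] smo_dd[OF Suc.prems(2)]])
    moreover have "dd v (\<lambda>y. f y - g y) y = dd v f y - dd v g y" if "y \<in> U" for y
      by (rule dd_diff[OF diffon_at[OF U smo_diffon[OF Suc.prems(1)] that] diffon_at[OF U smo_diffon[OF Suc.prems(2)] that]])
    ultimately show "smo U n (dd v (\<lambda>y. f y - g y))"
      by (rule smo_cong[OF U, rotated])
  qed
qed

lemma smo_minus:
  assumes U: "open U"
  shows "smo U n f \<Longrightarrow> smo U n (\<lambda>y. - f y)"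
proof (induction n arbitrary: f)
  case 0 then show ?case
    using smo_diffon unfolding smo_def by (auto intro!: derivative_intros)
next
  case (Suc n)
  show ?case
  proof (rule smo_SucI)
    show "(\<lambda>y. - f y) differentiable_on U"
      using Suc.prems smo_diffon by (auto intro!: derivative_intros)
    fix v
    have "smo U n (\<lambda>y. - dd v f y)"
      by (rule Suc.IH[OF smo_dd[OF Suc.prems(1)]])
    moreover have "dd v (\<lambda>y. - f y) y = - dd v f y" if "y \<in> U" for y
      by (rule dd_minus[OF diffon_at[OF U smo_diffon[OF Suc.prems(1)] that]])
    ultimately show "smo U n (dd v (\<lambda>y. - f y))"
      by (rule smo_cong[OF U, rotated])
  qed
qed

lemma smo_mult:
  assumes U: "open U"
  shows "smo U n f \<Longrightarrow> smo U n g \<Longrightarrow> smo U n (\<lambda>y. f y * g y)"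
proof (induction n arbitrary: f g)
  case 0 then show ?case
    using smo_diffon unfolding smo_def by (auto intro!: derivative_intros)
next
  case (Suc n)
  show ?case
  proof (rule smo_SucI)
    show "(\<lambda>y. f y * g y) differentiable_on U"
      using Suc.prems smo_diffon by (auto intro!: derivative_intros)
    fix v
    have "smo U n (\<lambda>y. dd v f y * g y)" "smo U n (\<lambda>y. f y * dd v g y)"
      by (rule Suc.IH[OF smo_dd[OF Suc.prems(1)] smo_mono[OF Suc.prems(2)]], simp,
          rule Suc.IH[OF smo_mono[OF Suc.prems(1)] smo_dd[OF Suc.prems(2)]], simp)
    then have "smo U n (\<lambda>y. dd v f y * g y + f y * dd v g y)"
      by (rule smo_add[OF U])
    moreover have "dd v (\<lambda>y. f y * g y) y = dd v f y * g y + f y * dd v g y" if "y \<in> U" for y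
      by (rule dd_mult[OF diffon_at[OF U smo_diffon[OF Suc.prems(1)] that] diffon_at[OF U smo_diffon[OF Suc.prems(2)] that]])
    ultimately show "smo U n (dd v (\<lambda>y. f y * g y))"
      by (rule smo_cong[OF U, rotated])
  qed
qed

lemma smo_inverse:
  assumes U: "open U" and nz: "\<And>y. y \<in> U \<Longrightarrow> f y \<noteq> 0"
  shows "smo U n f \<Longrightarrow> smo U n (\<lambda>y. inverse (f y))"
proof (induction n)
  case 0 then show ?case
    unfolding smo_def
    by (auto intro!: differentiable_at_imp_differentiable_on differentiable_inverse diffon_at[OF U smo_diffon[OF 0]] nz)
next
  case (Suc n)
  have inv: "smo U n (\<lambda>y. inverse (f y))" using Suc smo_mono by (metis le_SucI order_refl)
  show ?case
  proof (rule smo_SucI)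
    show "(\<lambda>y. inverse (f y)) differentiable_on U"
      by (intro differentiable_at_imp_differentiable_on differentiable_inverse diffon_at[OF U smo_diffon[OF Suc.prems]] nz)
    fix v
    have "smo U n (\<lambda>y. inverse (f y) * dd v f y)"
      by (rule smo_mult[OF U inv smo_dd[OF Suc.prems]])
    then have "smo U n (\<lambda>y. inverse (f y) * dd v f y * inverse (f y))"
      by (rule smo_mult[OF U _ inv])
    then have "smo U n (\<lambda>y. - (inverse (f y) * dd v f y * inverse (f y)))"
      by (rule smo_minus[OF U])
    moreover have "dd v (\<lambda>y. inverse (f y)) y = - (inverse (f y) * dd v f y * inverse (f y))" if "y \<in> U" for y
      by (rule dd_inverse[OF diffon_at[OF U smo_diffon[OF Suc.prems] that] nz[OF that]])
    ultimately show "smo U n (dd v (\<lambda>y. inverse (f y)))"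
      by (rule smo_cong[OF U, rotated])
  qed
qed

lemma smo_linear:
  assumes "bounded_linear (l :: point \<Rightarrow> real)"
  shows "smo U n (\<lambda>z. complex_of_real (l z))"
proof -
  have H: "((\<lambda>z. complex_of_real (l z)) has_derivative (\<lambda>z. complex_of_real (l z))) (at y)" for y
    by (rule bounded_linear.has_derivative[OF bounded_linear_of_real, OF bounded_linear.has_derivative[OF assms has_derivative_ident]])
  have D: "(\<lambda>z. complex_of_real (l z)) differentiable_on U"
    by (intro differentiable_at_imp_differentiable_on differentiableI[OF H])
  show ?thesis
  proof (cases n)
    case 0 then show ?thesis unfolding smo_def using D by simp
  next
    case (Suc m)
    have E: "dd v (\<lambda>z. complex_of_real (l z)) = (\<lambda>y. complex_of_real (l v))" for v
      by (rule ext) (rule dd_linear[OF assms])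
    show ?thesis unfolding Suc
      by (rule smo_SucI[OF D]) (simp only: E smo_const)
  qed
qed

lemma hd_sincos:
  assumes "bounded_linear (l :: point \<Rightarrow> real)"
  shows "((\<lambda>z. complex_of_real (sin (l z))) has_derivative (\<lambda>h. complex_of_real (cos (l y) * l h))) (at y)"
    and "((\<lambda>z. complex_of_real (cos (l z))) has_derivative (\<lambda>h. complex_of_real (- sin (l y) * l h))) (at y)"
proof -
  have L: "(l has_derivative l) (at y)" using bounded_linear.has_derivative[OF assms has_derivative_ident] by simp
  show "((\<lambda>z. complex_of_real (sin (l z))) has_derivative (\<lambda>h. complex_of_real (cos (l y) * l h))) (at y)"
    by (rule bounded_linear.has_derivative[OF bounded_linear_of_real, of "\<lambda>z. sin (l z)", simplified])
       (auto intro!: derivative_eq_intros L simp: mult.commute)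
  show "((\<lambda>z. complex_of_real (cos (l z))) has_derivative (\<lambda>h. complex_of_real (- sin (l y) * l h))) (at y)"
    by (rule bounded_linear.has_derivative[OF bounded_linear_of_real, of "\<lambda>z. cos (l z)", simplified])
       (auto intro!: derivative_eq_intros L simp: mult.commute)
qed

lemma dd_sin:
  assumes "bounded_linear (l :: point \<Rightarrow> real)"
  shows "dd v (\<lambda>z. complex_of_real (sin (l z))) y = complex_of_real (l v) * complex_of_real (cos (l y))"
    and "dd v (\<lambda>z. complex_of_real (cos (l z))) y = - (complex_of_real (l v) * complex_of_real (sin (l y)))"
  using dd_at[OF hd_sincos(1)[OF assms]] dd_at[OF hd_sincos(2)[OF assms]] by (simp_all add: mult.commute)

lemma smo_sincos:
  assumes U: "open U" and l: "bounded_linear (l :: point \<Rightarrow> real)"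
  shows "smo U n (\<lambda>z. complex_of_real (sin (l z))) \<and> smo U n (\<lambda>z. complex_of_real (cos (l z)))"
proof (induction n)
  have D: "(\<lambda>z. complex_of_real (sin (l z))) differentiable_on U" "(\<lambda>z. complex_of_real (cos (l z))) differentiable_on U"
    by (intro differentiable_at_imp_differentiable_on differentiableI[OF hd_sincos(1)[OF l]] differentiableI[OF hd_sincos(2)[OF l]])+
  {
  case 0
  then show ?case unfolding smo_def using D by simp
next
  case (Suc n)
  have e1: "dd v (\<lambda>z. complex_of_real (sin (l z))) = (\<lambda>y. complex_of_real (l v) * complex_of_real (cos (l y)))" for v
    by (rule ext) (rule dd_sin(1)[OF l])
  have e2: "dd v (\<lambda>z. complex_of_real (cos (l z))) = (\<lambda>y. - (complex_of_real (l v) * complex_of_real (sin (l y))))" for v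
    by (rule ext) (rule dd_sin(2)[OF l])
  show ?case
  proof
    show "smo U (Suc n) (\<lambda>z. complex_of_real (sin (l z)))"
      by (rule smo_SucI[OF D(1)]) (simp only: e1, rule smo_mult[OF U smo_const], use Suc in blast)
    show "smo U (Suc n) (\<lambda>z. complex_of_real (cos (l z)))"
      by (rule smo_SucI[OF D(2)]) (simp only: e2, rule smo_minus[OF U], rule smo_mult[OF U smo_const], use Suc in blast)
  qed
  }
qed


lemma schwarz_est:
  fixes f :: "point \<Rightarrow> complex"
  assumes U: "open U" and x: "x \<in> U" and dg: "dd u f differentiable_on U"
    and df: "f differentiable_on U"
    and cg: "continuous (at x) (dd v (dd u f))" and e: "\<epsilon> > 0"
  shows "\<exists>\<delta>>0. \<forall>h. 0 < h \<and> h < \<delta> \<longrightarrow>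
     norm (f (x + h *\<^sub>R u + h *\<^sub>R v) - f (x + h *\<^sub>R u) - f (x + h *\<^sub>R v) + f x
           - complex_of_real (h^2) * dd v (dd u f) x) \<le> 9 * \<epsilon> * h^2"
proof -
  define g where "g = dd v (dd u f)"
  define c0 where "c0 = g x"
  obtain d1 where d1: "d1 > 0" "\<And>z. dist z x < d1 \<Longrightarrow> dist (g z) c0 < \<epsilon>"
    using cg e unfolding continuous_at_eps_delta g_def c0_def by blast
  obtain d2 where d2: "d2 > 0" "ball x d2 \<subseteq> U"
    using U x open_contains_ball by blast
  define K where "K = norm u + norm v + 1"
  have K: "K > 0" unfolding K_def by (simp add: add_nonneg_pos)
  define \<delta> where "\<delta> = min d1 d2 / K"
  have dpos: "\<delta> > 0" unfolding \<delta>_def using d1 d2 K by simp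
  have near: "x + s *\<^sub>R u + t *\<^sub>R v \<in> U \<and> norm (g (x + s *\<^sub>R u + t *\<^sub>R v) - c0) < \<epsilon>"
    if "0 \<le> s" "s \<le> h" "0 \<le> t" "t \<le> h" "h < \<delta>" for s t h
  proof -
    have "norm (s *\<^sub>R u + t *\<^sub>R v) \<le> s * norm u + t * norm v"
      using norm_triangle_ineq[of "s *\<^sub>R u" "t *\<^sub>R v"] that by simp
    also have "\<dots> \<le> h * norm u + h * norm v"
      using that by (intro add_mono mult_right_mono) auto
    also have "\<dots> < \<delta> * K"
    proof -
      have "h * norm u + h * norm v \<le> h * K" unfolding K_def using that by (simp add: algebra_simps)
      also have "\<dots> < \<delta> * K" using that K by simp
      finally show ?thesis .
    qed
    also have "\<dots> = min d1 d2" unfolding \<delta>_def using K by simp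
    finally have n: "norm (s *\<^sub>R u + t *\<^sub>R v) < min d1 d2" .
    have dist: "dist (x + s *\<^sub>R u + t *\<^sub>R v) x = norm (s *\<^sub>R u + t *\<^sub>R v)"
      by (simp add: dist_norm algebra_simps)
    have "x + s *\<^sub>R u + t *\<^sub>R v \<in> ball x d2"
      using n dist by (simp add: dist_commute)
    moreover have "dist (g (x + s *\<^sub>R u + t *\<^sub>R v)) c0 < \<epsilon>"
      using n dist d1(2)[of "x + s *\<^sub>R u + t *\<^sub>R v"] by simp
    ultimately show ?thesis using d2(2) by (auto simp: dist_norm)
  qed
  show ?thesis
  proof (intro exI[of _ \<delta>] conjI allI impI dpos)
    fix h :: real assume h: "0 < h \<and> h < \<delta>"
    have seg: "closed_segment 0 h \<subseteq> {0..h}" using h by (simp add: closed_segment_eq_real_ivl)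
    have S1: "norm (dd u f (x + s *\<^sub>R u + h *\<^sub>R v) - dd u f (x + s *\<^sub>R u) - complex_of_real h * c0) \<le> 3 * \<epsilon> * h"
      if s: "0 \<le> s" "s \<le> h" for s
    proof -
      define p where "p = x + s *\<^sub>R u"
      have der: "((\<lambda>t. dd u f (p + t *\<^sub>R v)) has_vector_derivative g (p + t *\<^sub>R v)) (at t within {0..h})"
        if "t \<in> {0..h}" for t
      proof -
        have "p + t *\<^sub>R v \<in> U" using near[of s h t] s that h unfolding p_def by auto
        then have dfp: "dd u f differentiable (at (p + t *\<^sub>R v))" by (rule diffon_at[OF U dg])
        show ?thesis unfolding g_def by (rule has_vector_derivative_at_within[OF dd_vd[OF dfp]])
      qed
      have B: "norm (g (p + t *\<^sub>R v) - g (p + 0 *\<^sub>R v)) \<le> 2 * \<epsilon>" if "t \<in> {0..h}" for t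
      proof -
        have a: "norm (g (p + t *\<^sub>R v) - c0) < \<epsilon>" using near[of s h t] s that h unfolding p_def by auto
        have b: "norm (g (p + 0 *\<^sub>R v) - c0) < \<epsilon>" using near[of s h 0] s that h unfolding p_def by auto
        have "norm (g (p + t *\<^sub>R v) - g (p + 0 *\<^sub>R v)) \<le> norm (g (p + t *\<^sub>R v) - c0) + norm (g (p + 0 *\<^sub>R v) - c0)"
          by (rule norm_diff_triangle_le) (auto simp: norm_minus_commute)
        then show ?thesis using a b by simp
      qed
      have L: "norm (dd u f (p + h *\<^sub>R v) - dd u f (p + 0 *\<^sub>R v) - (h - 0) *\<^sub>R g (p + 0 *\<^sub>R v)) \<le> norm (h - 0) * (2 * \<epsilon>)"
        by (rule vector_differentiable_bound_linearization[OF der seg B]) (use h in auto)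
      have b: "norm (g (p + 0 *\<^sub>R v) - c0) < \<epsilon>" using near[of s h 0] s h unfolding p_def by auto
      have eq: "dd u f (x + s *\<^sub>R u + h *\<^sub>R v) - dd u f (x + s *\<^sub>R u) - complex_of_real h * c0
          = (dd u f (p + h *\<^sub>R v) - dd u f (p + 0 *\<^sub>R v) - (h - 0) *\<^sub>R g (p + 0 *\<^sub>R v))
            + complex_of_real h * (g (p + 0 *\<^sub>R v) - c0)"
        unfolding p_def by (simp add: scaleR_conv_of_real algebra_simps)
      have "norm (complex_of_real h * (g (p + 0 *\<^sub>R v) - c0)) \<le> h * \<epsilon>"
        using b h by (simp add: norm_mult)
      moreover have "norm (dd u f (p + h *\<^sub>R v) - dd u f (p + 0 *\<^sub>R v) - (h - 0) *\<^sub>R g (p + 0 *\<^sub>R v)) \<le> 2 * \<epsilon> * h"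
        using L h by (simp add: mult.commute mult.left_commute)
      ultimately show ?thesis unfolding eq
        using norm_triangle_ineq[of "dd u f (p + h *\<^sub>R v) - dd u f (p + 0 *\<^sub>R v) - (h - 0) *\<^sub>R g (p + 0 *\<^sub>R v)"
          "complex_of_real h * (g (p + 0 *\<^sub>R v) - c0)"] mult.commute[of h \<epsilon>] by linarith
    qed
    define \<phi> where "\<phi> = (\<lambda>s. f ((x + h *\<^sub>R v) + s *\<^sub>R u) - f (x + s *\<^sub>R u))"
    define \<phi>' where "\<phi>' = (\<lambda>s. dd u f ((x + h *\<^sub>R v) + s *\<^sub>R u) - dd u f (x + s *\<^sub>R u))"
    have der: "(\<phi> has_vector_derivative \<phi>' s) (at s within {0..h})" if "s \<in> {0..h}" for s
    proof -
      have p1: "(x + h *\<^sub>R v) + s *\<^sub>R u = x + s *\<^sub>R u + h *\<^sub>R v" by (simp add: algebra_simps)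
      have "x + s *\<^sub>R u + h *\<^sub>R v \<in> U" using near[of s h h] that h by auto
      then have d1: "f differentiable (at ((x + h *\<^sub>R v) + s *\<^sub>R u))" unfolding p1 by (rule diffon_at[OF U df])
      have "x + s *\<^sub>R u + 0 *\<^sub>R v \<in> U" using near[of s h 0] that h by auto
      then have d2: "f differentiable (at (x + s *\<^sub>R u))" using diffon_at[OF U df] by simp
      show ?thesis unfolding \<phi>_def \<phi>'_def
        by (rule has_vector_derivative_at_within, rule has_vector_derivative_diff, rule dd_vd[OF d1], rule dd_vd[OF d2])
    qed
    have P: "\<phi>' s = dd u f (x + s *\<^sub>R u + h *\<^sub>R v) - dd u f (x + s *\<^sub>R u)" for s
      unfolding \<phi>'_def by (simp add: algebra_simps)
    have B: "norm (\<phi>' s - \<phi>' 0) \<le> 6 * \<epsilon> * h" if "s \<in> {0..h}" for s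
    proof -
      have a: "norm (\<phi>' s - complex_of_real h * c0) \<le> 3 * \<epsilon> * h" using S1[of s] that unfolding P by auto
      have b: "norm (\<phi>' 0 - complex_of_real h * c0) \<le> 3 * \<epsilon> * h" using S1[of 0] h unfolding P by auto
      have "norm (\<phi>' s - \<phi>' 0) \<le> norm (\<phi>' s - complex_of_real h * c0) + norm (\<phi>' 0 - complex_of_real h * c0)"
        using norm_triangle_ineq4[of "\<phi>' s - complex_of_real h * c0" "\<phi>' 0 - complex_of_real h * c0"] by simp
      then show ?thesis using a b by simp
    qed
    have L: "norm (\<phi> h - \<phi> 0 - (h - 0) *\<^sub>R \<phi>' 0) \<le> norm (h - 0) * (6 * \<epsilon> * h)"
      by (rule vector_differentiable_bound_linearization[OF der seg B]) (use h in auto)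
    have b: "norm (\<phi>' 0 - complex_of_real h * c0) \<le> 3 * \<epsilon> * h" using S1[of 0] h unfolding P by auto
    have eq: "f (x + h *\<^sub>R u + h *\<^sub>R v) - f (x + h *\<^sub>R u) - f (x + h *\<^sub>R v) + f x - complex_of_real (h^2) * c0
        = (\<phi> h - \<phi> 0 - (h - 0) *\<^sub>R \<phi>' 0) + complex_of_real h * (\<phi>' 0 - complex_of_real h * c0)"
      unfolding \<phi>_def by (simp add: scaleR_conv_of_real algebra_simps power2_eq_square)
    have n2: "norm (complex_of_real h * (\<phi>' 0 - complex_of_real h * c0)) \<le> h * (3 * \<epsilon> * h)"
      using b h by (simp add: norm_mult mult_left_mono)
    have "norm (\<phi> h - \<phi> 0 - (h - 0) *\<^sub>R \<phi>' 0) \<le> h * (6 * \<epsilon> * h)" using L h by simp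
    then show "norm (f (x + h *\<^sub>R u + h *\<^sub>R v) - f (x + h *\<^sub>R u) - f (x + h *\<^sub>R v) + f x
           - complex_of_real (h^2) * dd v (dd u f) x) \<le> 9 * \<epsilon> * h^2"
      using n2 norm_triangle_ineq[of "\<phi> h - \<phi> 0 - (h - 0) *\<^sub>R \<phi>' 0" "complex_of_real h * (\<phi>' 0 - complex_of_real h * c0)"]
      unfolding eq[unfolded c0_def g_def] c0_def g_def
      by (simp add: power2_eq_square algebra_simps)
  qed
qed

lemma schwarz:
  assumes U: "open U" and x: "x \<in> U" and sm: "smo U 2 f"
  shows "dd v (dd u f) x = dd u (dd v f) x"
proof (rule ccontr)
  assume ne: "dd v (dd u f) x \<noteq> dd u (dd v f) x"
  define d where "d = norm (dd v (dd u f) x - dd u (dd v f) x)"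
  have dpos: "d > 0" using ne unfolding d_def by simp
  have s1: "smo U 1 (dd u f)" "smo U 1 (dd v f)" using smo_dd[of U 1 f] sm by (simp_all add: numeral_2_eq_2)
  have df: "f differentiable_on U" by (rule smo_diffon[OF sm])
  have dgu: "dd u f differentiable_on U" "dd v f differentiable_on U" using s1 smo_diffon by blast+
  have "smo U 0 (dd v (dd u f))" "smo U 0 (dd u (dd v f))" using s1 smo_dd[of U 0] by (simp_all add: One_nat_def)
  then have "dd v (dd u f) differentiable_on U" "dd u (dd v f) differentiable_on U" using smo_diffon by blast+
  then have c: "continuous (at x) (dd v (dd u f))" "continuous (at x) (dd u (dd v f))"
    using diffon_at[OF U _ x] differentiable_imp_continuous_within by blast+
  define \<epsilon> where "\<epsilon> = d / 36"
  have e: "\<epsilon> > 0" using dpos unfolding \<epsilon>_def by simp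
  obtain \<delta>1 where \<delta>1: "\<delta>1 > 0" "\<And>h. 0 < h \<and> h < \<delta>1 \<Longrightarrow>
     norm (f (x + h *\<^sub>R u + h *\<^sub>R v) - f (x + h *\<^sub>R u) - f (x + h *\<^sub>R v) + f x
           - complex_of_real (h^2) * dd v (dd u f) x) \<le> 9 * \<epsilon> * h^2"
    using schwarz_est[OF U x dgu(1) df c(1) e] by blast
  obtain \<delta>2 where \<delta>2: "\<delta>2 > 0" "\<And>h. 0 < h \<and> h < \<delta>2 \<Longrightarrow>
     norm (f (x + h *\<^sub>R v + h *\<^sub>R u) - f (x + h *\<^sub>R v) - f (x + h *\<^sub>R u) + f x
           - complex_of_real (h^2) * dd u (dd v f) x) \<le> 9 * \<epsilon> * h^2"
    using schwarz_est[OF U x dgu(2) df c(2) e] by blast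
  define h where "h = min \<delta>1 \<delta>2 / 2"
  have h: "0 < h" "h < \<delta>1" "h < \<delta>2" unfolding h_def using \<delta>1 \<delta>2 by auto
  define D where "D = f (x + h *\<^sub>R u + h *\<^sub>R v) - f (x + h *\<^sub>R u) - f (x + h *\<^sub>R v) + f x"
  have D2: "f (x + h *\<^sub>R v + h *\<^sub>R u) - f (x + h *\<^sub>R v) - f (x + h *\<^sub>R u) + f x = D"
    unfolding D_def by (simp add: algebra_simps)
  have a: "norm (D - complex_of_real (h^2) * dd v (dd u f) x) \<le> 9 * \<epsilon> * h^2"
    using \<delta>1(2)[of h] h unfolding D_def by auto
  have b: "norm (D - complex_of_real (h^2) * dd u (dd v f) x) \<le> 9 * \<epsilon> * h^2"
    using \<delta>2(2)[of h] h D2 by auto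
  have eqn: "complex_of_real (h^2) * (dd v (dd u f) x - dd u (dd v f) x)
      = (D - complex_of_real (h^2) * dd u (dd v f) x) - (D - complex_of_real (h^2) * dd v (dd u f) x)"
    by (simp add: algebra_simps)
  have nn: "norm (complex_of_real (h^2) * (dd v (dd u f) x - dd u (dd v f) x)) = h^2 * d"
    unfolding d_def norm_mult norm_of_real by simp
  have "norm (complex_of_real (h^2) * (dd v (dd u f) x - dd u (dd v f) x))
     \<le> norm (D - complex_of_real (h^2) * dd u (dd v f) x) + norm (D - complex_of_real (h^2) * dd v (dd u f) x)"
    unfolding eqn by (rule norm_triangle_ineq4)
  then have "h^2 * d \<le> 18 * \<epsilon> * h^2" using a b nn by linarith
  then have "d \<le> 18 * \<epsilon>" using h by simp
  then show False using dpos unfolding \<epsilon>_def by simp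
qed


definition pd :: "point set \<Rightarrow> point \<Rightarrow> (point \<Rightarrow> complex) \<Rightarrow> point \<Rightarrow> complex" where
  "pd U v f = (\<lambda>y. if y \<in> U then dd v f y else 0)"

definition ind :: "point set \<Rightarrow> point \<Rightarrow> complex" where
  "ind U = (\<lambda>y. if y \<in> U then 1 else 0)"

lemma smooth_cong:
  assumes "open U" "\<And>y. y \<in> U \<Longrightarrow> f y = g y" "smooth_on U g"
  shows "smooth_on U f"
  using assms smo_cong unfolding smooth_smo by blast

lemma sm_const: "smooth_on U (\<lambda>y. c)"
  unfolding smooth_smo using smo_const by blast

lemma sm_add: "open U \<Longrightarrow> smooth_on U f \<Longrightarrow> smooth_on U g \<Longrightarrow> smooth_on U (\<lambda>y. f y + g y)"
  unfolding smooth_smo using smo_add by blast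
lemma sm_diff: "open U \<Longrightarrow> smooth_on U f \<Longrightarrow> smooth_on U g \<Longrightarrow> smooth_on U (\<lambda>y. f y - g y)"
  unfolding smooth_smo using smo_diff by blast
lemma sm_mult: "open U \<Longrightarrow> smooth_on U f \<Longrightarrow> smooth_on U g \<Longrightarrow> smooth_on U (\<lambda>y. f y * g y)"
  unfolding smooth_smo using smo_mult by blast
lemma sm_minus: "open U \<Longrightarrow> smooth_on U f \<Longrightarrow> smooth_on U (\<lambda>y. - f y)"
  unfolding smooth_smo using smo_minus by blast
lemma sm_inverse: "open U \<Longrightarrow> (\<And>y. y \<in> U \<Longrightarrow> f y \<noteq> 0) \<Longrightarrow> smooth_on U f \<Longrightarrow> smooth_on U (\<lambda>y. inverse (f y))"
  unfolding smooth_smo using smo_inverse by blast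
lemma sm_dd: "smooth_on U f \<Longrightarrow> smooth_on U (dd v f)"
  unfolding smooth_smo using smo_dd by blast

lemma sm_pd: "open U \<Longrightarrow> smooth_on U f \<Longrightarrow> smooth_on U (pd U v f)"
  by (rule smooth_cong[of U _ "dd v f"]) (auto simp: pd_def intro: sm_dd)

lemma sm_ind: "open U \<Longrightarrow> smooth_on U (ind U)"
  by (rule smooth_cong[of U _ "\<lambda>y. 1"]) (auto simp: ind_def intro: sm_const)

lemma sm_diffat: "open U \<Longrightarrow> smooth_on U f \<Longrightarrow> y \<in> U \<Longrightarrow> f differentiable (at y)"
  unfolding smooth_smo using smo_diffon diffon_at by blast

lemma pd_local:
  assumes "open U" "\<And>y. y \<in> U \<Longrightarrow> f y = g y"
  shows "pd U v f = pd U v g"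
proof -
  have "dd v f y = dd v g y" if "y \<in> U" for y by (rule dd_local[OF assms(1) that assms(2)])
  then show ?thesis unfolding pd_def by auto
qed

lemma pd_add: "open U \<Longrightarrow> smooth_on U f \<Longrightarrow> smooth_on U g \<Longrightarrow>
  pd U v (\<lambda>y. f y + g y) = (\<lambda>y. pd U v f y + pd U v g y)"
  unfolding pd_def by (auto intro!: dd_add sm_diffat)
lemma pd_diff: "open U \<Longrightarrow> smooth_on U f \<Longrightarrow> smooth_on U g \<Longrightarrow>
  pd U v (\<lambda>y. f y - g y) = (\<lambda>y. pd U v f y - pd U v g y)"
  unfolding pd_def by (auto intro!: dd_diff sm_diffat)
lemma pd_mult: "open U \<Longrightarrow> smooth_on U f \<Longrightarrow> smooth_on U g \<Longrightarrow>
  pd U v (\<lambda>y. f y * g y) = (\<lambda>y. pd U v f y * g y + f y * pd U v g y)"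
  unfolding pd_def by (auto intro!: dd_mult sm_diffat)
lemma pd_minus: "open U \<Longrightarrow> smooth_on U f \<Longrightarrow>
  pd U v (\<lambda>y. - f y) = (\<lambda>y. - pd U v f y)"
  unfolding pd_def by (auto intro!: dd_minus sm_diffat)
lemma pd_const: "pd U v (\<lambda>y. c) = (\<lambda>y. 0)"
  unfolding pd_def by (auto simp: dd_const)
lemma pd_zero: "pd U v (\<lambda>y. 0) = (\<lambda>y. 0)"
  by (rule pd_const)

lemma pd_ind: "open U \<Longrightarrow> pd U v (ind U) = (\<lambda>y. 0)"
proof -
  assume U: "open U"
  have "dd v (ind U) y = dd v (\<lambda>y. 1) y" if "y \<in> U" for y
    by (rule dd_local[OF U that]) (simp add: ind_def)
  then show ?thesis unfolding pd_def by (auto simp: dd_const)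
qed

lemma pd_swap:
  assumes "open U" "smooth_on U f"
  shows "pd U u (pd U v f) = pd U v (pd U u f)"
proof -
  have "dd u (pd U v f) y = dd v (pd U u f) y" if y: "y \<in> U" for y
  proof -
    have "dd u (pd U v f) y = dd u (dd v f) y"
      by (rule dd_local[OF assms(1) y]) (simp add: pd_def)
    also have "\<dots> = dd v (dd u f) y"
      using schwarz[OF assms(1) y] assms(2) unfolding smooth_smo by metis
    also have "\<dots> = dd v (pd U u f) y"
      by (rule dd_local[OF assms(1) y]) (simp add: pd_def)
    finally show ?thesis .
  qed
  then show ?thesis unfolding pd_def by auto
qed

lemma pd_rfun:
  assumes "open U" "\<And>y. y \<in> U \<Longrightarrow> (g has_real_derivative g' (fst (snd y))) (at (fst (snd y)))"
  shows "pd U v (\<lambda>z. complex_of_real (g (fst (snd z)))) =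
         (\<lambda>y. ind U y * complex_of_real (fst (snd v)) * complex_of_real (g' (fst (snd y))))"
proof -
  have "dd v (\<lambda>z. complex_of_real (g (fst (snd z)))) y = complex_of_real (fst (snd v)) * complex_of_real (g' (fst (snd y)))"
    if y: "y \<in> U" for y
  proof -
    have bl: "bounded_linear (\<lambda>z::point. fst (snd z))"
      by (intro bounded_linear_compose[OF bounded_linear_fst bounded_linear_snd])
    have L: "((\<lambda>z::point. fst (snd z)) has_derivative (\<lambda>z. fst (snd z))) (at y)"
      using bounded_linear.has_derivative[OF bl has_derivative_ident] by simp
    have G: "(g has_derivative (\<lambda>h. g' (fst (snd y)) * h)) (at (fst (snd y)))"
      using assms(2)[OF y] by (simp add: has_field_derivative_def)
    have "((\<lambda>z. g (fst (snd z))) has_derivative (\<lambda>h. g' (fst (snd y)) * fst (snd h))) (at y)"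
      using has_derivative_compose[OF L G] by (simp add: o_def)
    then have "((\<lambda>z. complex_of_real (g (fst (snd z)))) has_derivative (\<lambda>h. complex_of_real (g' (fst (snd y)) * fst (snd h)))) (at y)"
      by (rule bounded_linear.has_derivative[OF bounded_linear_of_real])
    then show ?thesis by (simp add: dd_at mult.commute)
  qed
  then show ?thesis unfolding pd_def ind_def by auto
qed

lemma pd_thfun:
  assumes "open U" "\<And>y. y \<in> U \<Longrightarrow> (g has_real_derivative g' (fst (snd (snd y)))) (at (fst (snd (snd y))))"
  shows "pd U v (\<lambda>z. complex_of_real (g (fst (snd (snd z))))) =
         (\<lambda>y. ind U y * complex_of_real (fst (snd (snd v))) * complex_of_real (g' (fst (snd (snd y)))))"
proof -
  have "dd v (\<lambda>z. complex_of_real (g (fst (snd (snd z))))) y = complex_of_real (fst (snd (snd v))) * complex_of_real (g' (fst (snd (snd y))))"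
    if y: "y \<in> U" for y
  proof -
    have bl: "bounded_linear (\<lambda>z::point. fst (snd (snd z)))"
      by (intro bounded_linear_compose[OF bounded_linear_fst] bounded_linear_compose[OF bounded_linear_snd] bounded_linear_snd)
    have L: "((\<lambda>z::point. fst (snd (snd z))) has_derivative (\<lambda>z. fst (snd (snd z)))) (at y)"
      using bounded_linear.has_derivative[OF bl has_derivative_ident] by simp
    have G: "(g has_derivative (\<lambda>h. g' (fst (snd (snd y))) * h)) (at (fst (snd (snd y))))"
      using assms(2)[OF y] by (simp add: has_field_derivative_def)
    have "((\<lambda>z. g (fst (snd (snd z)))) has_derivative (\<lambda>h. g' (fst (snd (snd y))) * fst (snd (snd h)))) (at y)"
      using has_derivative_compose[OF L G] by (simp add: o_def)
    then have "((\<lambda>z. complex_of_real (g (fst (snd (snd z))))) has_derivative (\<lambda>h. complex_of_real (g' (fst (snd (snd y))) * fst (snd (snd h))))) (at y)"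
      by (rule bounded_linear.has_derivative[OF bounded_linear_of_real])
    then show ?thesis by (simp add: dd_at mult.commute)
  qed
  then show ?thesis unfolding pd_def ind_def by auto
qed


abbreviation "e1 \<equiv> (1, 0, 0, 0) :: point"
abbreviation "e2 \<equiv> (0, 1, 0, 0) :: point"
abbreviation "e3 \<equiv> (0, 0, 1, 0) :: point"
abbreviation "e4 \<equiv> (0, 0, 0, 1) :: point"

definition Rf :: "point \<Rightarrow> complex" where "Rf y = of_real (fst (snd y))"
definition IRf :: "point \<Rightarrow> complex" where "IRf y = of_real (1 / fst (snd y))"
definition Wa :: "real \<Rightarrow> real \<Rightarrow> point \<Rightarrow> complex" where "Wa M k y = of_real (w M k (fst (snd y)))"
definition Ua :: "real \<Rightarrow> real \<Rightarrow> point \<Rightarrow> complex" where "Ua M k y = of_real (1 / w M k (fst (snd y)))"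
definition Ca :: "real \<Rightarrow> real \<Rightarrow> point \<Rightarrow> complex" where "Ca M k y = of_real (Delta M k (fst (snd y)) / (fst (snd y))^2)"
definition Sn :: "point \<Rightarrow> complex" where "Sn y = of_real (sin (fst (snd (snd y))))"
definition Cs :: "point \<Rightarrow> complex" where "Cs y = of_real (cos (fst (snd (snd y))))"
definition ISn :: "point \<Rightarrow> complex" where "ISn y = of_real (1 / sin (fst (snd (snd y))))"

locale sads =
  fixes M k :: real
  assumes Mpos: "M > 0" and kpos: "k > 0"
begin

abbreviation "U \<equiv> exterior M k"

lemma openU: "open U"
proof -
  have "U = {y. 0 < fst (snd y)} \<inter> {y. 0 < Delta M k (fst (snd y))} \<inter> {y. 0 < fst (snd (snd y))} \<inter> {y. fst (snd (snd y)) < pi}"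
    unfolding exterior_def by auto
  also have "open \<dots>"
    unfolding Delta_def
    by (intro open_Int open_Collect_less continuous_intros)
  finally show ?thesis .
qed

lemma inU: assumes "y \<in> U"
  shows "0 < fst (snd y)" "0 < Delta M k (fst (snd y))" "0 < fst (snd (snd y))" "fst (snd (snd y)) < pi"
  using assms unfolding exterior_def by auto

lemma w_pos: assumes "y \<in> U" shows "w M k (fst (snd y)) > 0"
  using inU[OF assms] unfolding w_def by simp

lemma sin_pos: assumes "y \<in> U" shows "sin (fst (snd (snd y))) > 0"
  using inU[OF assms] sin_gt_zero by blast

lemma bl_r: "bounded_linear (\<lambda>z::point. fst (snd z))"
  by (intro bounded_linear_compose[OF bounded_linear_fst bounded_linear_snd])
lemma bl_th: "bounded_linear (\<lambda>z::point. fst (snd (snd z)))"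
  by (intro bounded_linear_compose[OF bounded_linear_fst] bounded_linear_compose[OF bounded_linear_snd] bounded_linear_snd)

lemma sm_Rf: "smooth_on U Rf"
  unfolding smooth_smo Rf_def using smo_linear[OF bl_r] by blast

lemma sm_IRf: "smooth_on U IRf"
proof (rule smooth_cong[OF openU _ sm_inverse[OF openU _ sm_Rf]])
  show "IRf y = inverse (Rf y)" if "y \<in> U" for y
    unfolding IRf_def Rf_def by (simp add: divide_inverse)
  show "Rf y \<noteq> 0" if "y \<in> U" for y
    using inU[OF that] unfolding Rf_def by simp
qed

lemma sm_Wa: "smooth_on U (Wa M k)"
proof (rule smooth_cong[OF openU])
  show "Wa M k y = IRf y * IRf y + of_real k * of_real k - 2 * of_real M * (IRf y * IRf y * IRf y)" if "y \<in> U" for y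
    using inU[OF that] unfolding Wa_def IRf_def w_def Delta_def
    by (simp add: field_simps power2_eq_square power4_eq_xxxx del: of_real_mult of_real_add of_real_diff)
      (simp add: field_simps)
  show "smooth_on U (\<lambda>y. IRf y * IRf y + of_real k * of_real k - 2 * of_real M * (IRf y * IRf y * IRf y))"
    by (intro sm_add sm_diff sm_mult sm_const sm_IRf openU)
qed

lemma sm_Ua: "smooth_on U (Ua M k)"
proof (rule smooth_cong[OF openU _ sm_inverse[OF openU _ sm_Wa]])
  show "Ua M k y = inverse (Wa M k y)" if "y \<in> U" for y
    unfolding Ua_def Wa_def by (simp add: divide_inverse)
  show "Wa M k y \<noteq> 0" if "y \<in> U" for y
    using w_pos[OF that] unfolding Wa_def by simp
qed

lemma sm_Ca: "smooth_on U (Ca M k)"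
proof (rule smooth_cong[OF openU])
  show "Ca M k y = 1 + of_real k * of_real k * (Rf y * Rf y) - 2 * of_real M * IRf y" if "y \<in> U" for y
    using inU[OF that] unfolding Ca_def IRf_def Rf_def Delta_def
    by (simp add: field_simps power2_eq_square power4_eq_xxxx del: of_real_mult of_real_add of_real_diff)
      (simp add: field_simps)
  show "smooth_on U (\<lambda>y. 1 + of_real k * of_real k * (Rf y * Rf y) - 2 * of_real M * IRf y)"
    by (intro sm_add sm_diff sm_mult sm_const sm_IRf sm_Rf openU)
qed

lemma sm_Sn: "smooth_on U Sn" and sm_Cs: "smooth_on U Cs"
  unfolding smooth_smo Sn_def Cs_def using smo_sincos[OF openU bl_th] by blast+

lemma sm_ISn: "smooth_on U ISn"
proof (rule smooth_cong[OF openU _ sm_inverse[OF openU _ sm_Sn]])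
  show "ISn y = inverse (Sn y)" if "y \<in> U" for y
    unfolding ISn_def Sn_def by (simp add: divide_inverse)
  show "Sn y \<noteq> 0" if "y \<in> U" for y
    using sin_pos[OF that] unfolding Sn_def by simp
qed

lemma pd_Rf: "pd U v Rf = (\<lambda>y. ind U y * of_real (fst (snd v)))"
proof -
  have "pd U v (\<lambda>z. complex_of_real ((\<lambda>r. r) (fst (snd z)))) = (\<lambda>y. ind U y * of_real (fst (snd v)) * of_real ((\<lambda>r. 1) (fst (snd y))))"
    by (rule pd_rfun[OF openU]) (auto intro!: derivative_eq_intros)
  then show ?thesis unfolding Rf_def by simp
qed

lemma pd_IRf: "pd U v IRf = (\<lambda>y. - (ind U y * of_real (fst (snd v)) * (IRf y * IRf y)))"
proof -
  have "pd U v (\<lambda>z. complex_of_real ((\<lambda>r. 1 / r) (fst (snd z)))) = (\<lambda>y. ind U y * of_real (fst (snd v)) * of_real ((\<lambda>r. - 1 / r^2) (fst (snd y))))"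
  proof (rule pd_rfun[OF openU])
    fix y assume y: "y \<in> U"
    then have r: "fst (snd y) > 0" by (rule inU)
    show "((\<lambda>r. 1 / r) has_real_derivative (\<lambda>r. - 1 / r^2) (fst (snd y))) (at (fst (snd y)))"
      using r by (auto intro!: derivative_eq_intros simp: field_simps power2_eq_square)
  qed
  then show ?thesis unfolding IRf_def by (simp add: power2_eq_square)
qed

lemma Dw: assumes r: "r > 0"
  shows "(w M k has_real_derivative (6 * M / r^4 - 2 / r^3)) (at r)"
proof -
  have W: "w M k = (\<lambda>r. (r^2 + k^2 * r^4 - 2 * M * r) / r^4)" unfolding w_def Delta_def by auto
  show ?thesis unfolding W using r
      by (auto intro!: derivative_eq_intros simp: field_simps eval_nat_numeral)
qed

lemma pd_Wa: "pd U v (Wa M k) = (\<lambda>y. ind U y * of_real (fst (snd v)) * (6 * of_real M * (IRf y * IRf y * IRf y * IRf y) - 2 * (IRf y * IRf y * IRf y)))"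
proof -
  have "pd U v (\<lambda>z. complex_of_real (w M k (fst (snd z)))) = (\<lambda>y. ind U y * of_real (fst (snd v)) * of_real ((\<lambda>r. 6 * M / r^4 - 2 / r^3) (fst (snd y))))"
  proof (rule pd_rfun[OF openU])
    fix y assume y: "y \<in> U"
    then have r: "fst (snd y) > 0" by (rule inU)
    show "(w M k has_real_derivative (\<lambda>r. 6 * M / r^4 - 2 / r^3) (fst (snd y))) (at (fst (snd y)))"
      using Dw[OF r] by simp
  qed
  then show ?thesis unfolding Wa_def IRf_def
    by (simp add: field_simps eval_nat_numeral)
qed

lemma pd_Ua: "pd U v (Ua M k) = (\<lambda>y. - (ind U y * of_real (fst (snd v)) * (Ua M k y * Ua M k y * (6 * of_real M * (IRf y * IRf y * IRf y * IRf y) - 2 * (IRf y * IRf y * IRf y)))))"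
proof -
  have "pd U v (\<lambda>z. complex_of_real ((\<lambda>r. inverse (w M k r)) (fst (snd z)))) = (\<lambda>y. ind U y * of_real (fst (snd v)) *
      of_real ((\<lambda>r. - (inverse (w M k r) * (6 * M / r^4 - 2 / r^3) * inverse (w M k r))) (fst (snd y))))"
  proof (rule pd_rfun[OF openU])
    fix y assume y: "y \<in> U"
    then have r: "fst (snd y) > 0" by (rule inU)
    show "((\<lambda>r. inverse (w M k r)) has_real_derivative (\<lambda>r. - (inverse (w M k r) * (6 * M / r^4 - 2 / r^3) * inverse (w M k r))) (fst (snd y))) (at (fst (snd y)))"
      using DERIV_inverse'[OF Dw[OF r]] w_pos[OF y] by simp
  qed
  moreover have "Ua M k = (\<lambda>z. complex_of_real ((\<lambda>r. inverse (w M k r)) (fst (snd z))))"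
    by (rule ext) (simp add: Ua_def divide_inverse)
  ultimately have P: "pd U v (Ua M k) = (\<lambda>y. ind U y * of_real (fst (snd v)) *
      of_real (- (inverse (w M k (fst (snd y))) * (6 * M / (fst (snd y))^4 - 2 / (fst (snd y))^3) * inverse (w M k (fst (snd y))))))"
    by simp
  show ?thesis unfolding P
  proof (rule ext)
    fix y
    show "ind U y * of_real (fst (snd v)) *
      of_real (- (inverse (w M k (fst (snd y))) * (6 * M / (fst (snd y))^4 - 2 / (fst (snd y))^3) * inverse (w M k (fst (snd y)))))
      = - (ind U y * of_real (fst (snd v)) * (Ua M k y * Ua M k y * (6 * of_real M * (IRf y * IRf y * IRf y * IRf y) - 2 * (IRf y * IRf y * IRf y))))"
    proof (cases "y \<in> U")
      case True
      have "- (inverse (w M k (fst (snd y))) * (6 * M / (fst (snd y))^4 - 2 / (fst (snd y))^3) * inverse (w M k (fst (snd y))))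
          = - ((1 / w M k (fst (snd y))) * (1 / w M k (fst (snd y))) * (6 * M * ((1 / fst (snd y)) * (1 / fst (snd y)) * (1 / fst (snd y)) * (1 / fst (snd y))) - 2 * ((1 / fst (snd y)) * (1 / fst (snd y)) * (1 / fst (snd y)))))"
        by (simp add: divide_inverse power4_eq_xxxx power3_eq_cube algebra_simps)
      then show ?thesis unfolding Ua_def IRf_def by (simp only: of_real_minus of_real_mult of_real_diff of_real_numeral mult_minus_right)
    qed (simp add: ind_def)
  qed
qed

lemma pd_Ca: "pd U v (Ca M k) = (\<lambda>y. ind U y * of_real (fst (snd v)) * (2 * of_real k * of_real k * Rf y + 2 * of_real M * (IRf y * IRf y)))"
proof -
  have W: "(\<lambda>r. Delta M k r / r^2) = (\<lambda>r. (r^2 + k^2 * r^4 - 2 * M * r) / r^2)" unfolding Delta_def by auto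
  have "pd U v (\<lambda>z. complex_of_real ((\<lambda>r. Delta M k r / r^2) (fst (snd z)))) = (\<lambda>y. ind U y * of_real (fst (snd v)) *
      of_real ((\<lambda>r. 2 * k * k * r + 2 * M / r^2) (fst (snd y))))"
  proof (rule pd_rfun[OF openU])
    fix y assume y: "y \<in> U"
    then have r: "fst (snd y) > 0" by (rule inU)
    show "((\<lambda>r. Delta M k r / r^2) has_real_derivative (\<lambda>r. 2 * k * k * r + 2 * M / r^2) (fst (snd y))) (at (fst (snd y)))"
      unfolding W using r
      by (auto intro!: derivative_eq_intros simp: field_simps eval_nat_numeral)
  qed
  then show ?thesis unfolding Ca_def IRf_def Rf_def
    by (simp add: field_simps eval_nat_numeral)
qed

lemma pd_Sn: "pd U v Sn = (\<lambda>y. ind U y * of_real (fst (snd (snd v))) * Cs y)"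
proof -
  have "pd U v (\<lambda>z. complex_of_real (sin (fst (snd (snd z))))) = (\<lambda>y. ind U y * of_real (fst (snd (snd v))) * of_real (cos (fst (snd (snd y)))))"
    by (rule pd_thfun[OF openU]) (auto intro!: derivative_eq_intros)
  then show ?thesis unfolding Sn_def Cs_def by simp
qed

lemma pd_Cs: "pd U v Cs = (\<lambda>y. - (ind U y * of_real (fst (snd (snd v))) * Sn y))"
proof -
  have "pd U v (\<lambda>z. complex_of_real (cos (fst (snd (snd z))))) = (\<lambda>y. ind U y * of_real (fst (snd (snd v))) * of_real (- sin (fst (snd (snd y)))))"
    by (rule pd_thfun[OF openU]) (auto intro!: derivative_eq_intros)
  then show ?thesis unfolding Sn_def Cs_def by simp
qed

lemma pd_ISn: "pd U v ISn = (\<lambda>y. - (ind U y * of_real (fst (snd (snd v))) * (Cs y * ISn y * ISn y)))"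
proof -
  have "pd U v (\<lambda>z. complex_of_real ((\<lambda>t. 1 / sin t) (fst (snd (snd z))))) = (\<lambda>y. ind U y * of_real (fst (snd (snd v))) * of_real ((\<lambda>t. - (cos t * (1 / sin t) * (1 / sin t))) (fst (snd (snd y)))))"
  proof (rule pd_thfun[OF openU])
    fix y assume y: "y \<in> U"
    then have s: "sin (fst (snd (snd y))) > 0" by (rule sin_pos)
    show "((\<lambda>t. 1 / sin t) has_real_derivative (\<lambda>t. - (cos t * (1 / sin t) * (1 / sin t))) (fst (snd (snd y)))) (at (fst (snd (snd y))))"
      using s by (auto intro!: derivative_eq_intros simp: field_simps power2_eq_square)
  qed
  then show ?thesis unfolding ISn_def Cs_def by simp
qed

end


context sads begin

definition "LP f = (\<lambda>y. pd U e1 f y + Ca M k y * pd U e2 f y)"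
definition "LbP f = (\<lambda>y. pd U e1 f y - Ca M k y * pd U e2 f y)"
definition "wL f = (\<lambda>y. Ua M k y * LP f y)"
definition "wLb f = (\<lambda>y. Ua M k y * LbP f y)"
definition "Phi0 f = (\<lambda>y. 6 * of_real M * IRf y * f y - Ua M k y * LP (LbP f) y)"

lemma sw:
  assumes "smooth_on U f"
  shows "pd U e2 (pd U e1 f) = pd U e1 (pd U e2 f)"
    "pd U e3 (pd U e1 f) = pd U e1 (pd U e3 f)"
    "pd U e4 (pd U e1 f) = pd U e1 (pd U e4 f)"
    "pd U e3 (pd U e2 f) = pd U e2 (pd U e3 f)"
    "pd U e4 (pd U e2 f) = pd U e2 (pd U e4 f)"
    "pd U e4 (pd U e3 f) = pd U e3 (pd U e4 f)"
  using pd_swap[OF openU assms] by blast+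

lemmas smrules = sm_add[OF openU] sm_diff[OF openU] sm_mult[OF openU] sm_minus[OF openU] sm_const
  sm_pd[OF openU] sm_ind[OF openU] sm_Rf sm_IRf sm_Wa sm_Ua sm_Ca sm_Sn sm_Cs sm_ISn
lemmas pdrules = pd_add[OF openU] pd_diff[OF openU] pd_mult[OF openU] pd_minus[OF openU] pd_const
  pd_ind[OF openU] pd_Rf pd_IRf pd_Wa pd_Ua pd_Ca pd_Sn pd_Cs pd_ISn

lemma rel_x:
  assumes x: "x \<in> U"
  shows "complex_of_real (fst (snd x)) * inverse (complex_of_real (fst (snd x))) = 1"
     "(complex_of_real (fst (snd x))^2 + of_real k ^2 * complex_of_real (fst (snd x))^4 - 2 * of_real M * complex_of_real (fst (snd x))) *
      inverse (complex_of_real (fst (snd x))^2 + of_real k ^2 * complex_of_real (fst (snd x))^4 - 2 * of_real M * complex_of_real (fst (snd x))) = 1"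
proof -
  have r0: "complex_of_real (fst (snd x)) \<noteq> 0" using inU(1)[OF x] by simp
  have D0: "complex_of_real (fst (snd x))^2 + of_real k ^2 * complex_of_real (fst (snd x))^4 - 2 * of_real M * complex_of_real (fst (snd x)) \<noteq> 0"
  proof -
    have "complex_of_real (fst (snd x))^2 + of_real k ^2 * complex_of_real (fst (snd x))^4 - 2 * of_real M * complex_of_real (fst (snd x)) = of_real (Delta M k (fst (snd x)))" unfolding Delta_def by simp
    then show ?thesis using inU(2)[OF x] by simp
  qed
  show "complex_of_real (fst (snd x)) * inverse (complex_of_real (fst (snd x))) = 1"
     "(complex_of_real (fst (snd x))^2 + of_real k ^2 * complex_of_real (fst (snd x))^4 - 2 * of_real M * complex_of_real (fst (snd x))) *
      inverse (complex_of_real (fst (snd x))^2 + of_real k ^2 * complex_of_real (fst (snd x))^4 - 2 * of_real M * complex_of_real (fst (snd x))) = 1"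
    using r0 D0 by simp_all
qed

lemma at_x:
  assumes x: "x \<in> U"
  shows "Rf x = complex_of_real (fst (snd x))" "IRf x = inverse (complex_of_real (fst (snd x)))"
    "Wa M k x = (complex_of_real (fst (snd x))^2 + of_real k ^2 * complex_of_real (fst (snd x))^4 - 2 * of_real M * complex_of_real (fst (snd x))) * inverse (complex_of_real (fst (snd x)))^4"
    "Ua M k x = complex_of_real (fst (snd x))^4 * inverse (complex_of_real (fst (snd x))^2 + of_real k ^2 * complex_of_real (fst (snd x))^4 - 2 * of_real M * complex_of_real (fst (snd x)))"
    "Ca M k x = (complex_of_real (fst (snd x))^2 + of_real k ^2 * complex_of_real (fst (snd x))^4 - 2 * of_real M * complex_of_real (fst (snd x))) * inverse (complex_of_real (fst (snd x)))^2"
    "ind U x = 1"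
  unfolding Rf_def IRf_def Wa_def Ua_def Ca_def w_def Delta_def ind_def using x
  by (simp_all add: divide_inverse power_mult_distrib power_inverse)

lemma test:
  assumes sm: "smooth_on U \<Psi>" and x: "x \<in> U"
  shows "wLb (wLb (\<lambda>y. Wa M k y * Wa M k y * wL (wL \<Psi>) y)) x =
    (6 * of_real M * IRf x - 2) * Phi0 \<Psi> x - Ua M k x * LP (LbP (Phi0 \<Psi>)) x - 12 * of_real M * pd U e1 \<Psi> x"
  unfolding wLb_def wL_def LP_def LbP_def Phi0_def
  apply (simp add: pdrules smrules sm sw)
  apply (simp only: at_x[OF x])
  apply (insert rel_x[OF x])
  apply algebra
  done

lemma test2:
  assumes sm: "smooth_on U \<Psi>" and x: "x \<in> U"
  shows "wL (wL (\<lambda>y. Wa M k y * Wa M k y * wLb (wLb \<Psi>) y)) x =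
    (6 * of_real M * IRf x - 2) * Phi0 \<Psi> x - Ua M k x * LP (LbP (Phi0 \<Psi>)) x + 12 * of_real M * pd U e1 \<Psi> x"
  unfolding wLb_def wL_def LP_def LbP_def Phi0_def
  apply (simp add: pdrules smrules sm sw)
  apply (simp only: at_x[OF x])
  apply (insert rel_x[OF x])
  apply algebra
  done

definition "AngP (s::int) f = (\<lambda>y. - (ISn y * pd U e3 (\<lambda>z. Sn z * pd U e3 f z) y
   + ISn y * ISn y * pd U e4 (pd U e4 f) y
   + of_int (2 * s) * \<i> * (Cs y * ISn y * ISn y) * pd U e4 f y
   - 4 * (Cs y * ISn y * (Cs y * ISn y)) * f y - 4 * f y))"

lemma test3:
  assumes sm: "smooth_on U \<Psi>" and x: "x \<in> U"
  shows "AngP s (\<lambda>y. Phi0 \<Psi> y - 2 * \<Psi> y) x =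
    (6 * of_real M * IRf x - 2) * AngP s \<Psi> x - Ua M k x * LP (LbP (AngP s \<Psi>)) x"
  unfolding AngP_def LP_def LbP_def Phi0_def
  apply (simp add: pdrules smrules sm sw)
  apply (simp only: at_x[OF x])
  apply algebra
  done

end


context sads begin

lemma tr_Lop:
  assumes FG: "\<And>z. z \<in> U \<Longrightarrow> F z = G z" and y: "y \<in> U"
  shows "Lop M k F y = LP G y" "Lbar M k F y = LbP G y"
proof -
  have a: "dd e1 F y = pd U e1 G y" "dd e2 F y = pd U e2 G y"
    using dd_local[OF openU y FG] y unfolding pd_def by auto
  obtain t r th ph where yy: "y = (t, r, th, ph)" by (cases y) auto
  show "Lop M k F y = LP G y" "Lbar M k F y = LbP G y"
    using a unfolding Lop_def Lbar_def LP_def LbP_def dt_def drstar_def dr_def Ca_def yy by simp_all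
qed

lemma tr_wL:
  assumes FG: "\<And>z. z \<in> U \<Longrightarrow> F z = G z" and y: "y \<in> U"
  shows "winvL M k F y = wL G y" "winvLbar M k F y = wLb G y"
proof -
  obtain t r th ph where yy: "y = (t, r, th, ph)" by (cases y) auto
  show "winvL M k F y = wL G y" "winvLbar M k F y = wLb G y"
    using tr_Lop[OF FG y] unfolding winvL_def winvLbar_def wL_def wLb_def mul_r_def Ua_def yy by simp_all
qed

lemma tr_W2: "mul_r (\<lambda>r. (w M k r)^2) F y = Wa M k y * Wa M k y * F y"
proof -
  obtain t r th ph where yy: "y = (t, r, th, ph)" by (cases y) auto
  show ?thesis unfolding mul_r_def Wa_def yy by (simp add: power2_eq_square)
qed

lemma tr_ang:
  assumes FG: "\<And>z. z \<in> U \<Longrightarrow> F z = G z" and y: "y \<in> U"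
  shows "angL s F y = AngP s G y"
proof -
  have inner: "(\<lambda>(t', r', th', ph'). complex_of_real (sin th') * dth F (t', r', th', ph')) = (\<lambda>z. Sn z * dd e3 F z)"
    by (auto simp: Sn_def dth_def)
  have i3: "dd e3 F z = pd U e3 G z" if "z \<in> U" for z
    using dd_local[OF openU that FG] that unfolding pd_def by auto
  have i4: "dd e4 F z = pd U e4 G z" if "z \<in> U" for z
    using dd_local[OF openU that FG] that unfolding pd_def by auto
  have a: "dd e3 (\<lambda>z. Sn z * dd e3 F z) y = pd U e3 (\<lambda>z. Sn z * pd U e3 G z) y"
    using dd_local[OF openU y, of "\<lambda>z. Sn z * dd e3 F z" "\<lambda>z. Sn z * pd U e3 G z" e3] i3 y unfolding pd_def by auto
  have b: "dd e4 (dd e4 F) y = pd U e4 (pd U e4 G) y"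
    using dd_local[OF openU y, of "dd e4 F" "pd U e4 G" e4] i4 y unfolding pd_def by auto
  obtain t r th ph where yy: "y = (t, r, th, ph)" by (cases y) auto
  have c: "F y = G y" "dd e4 F y = pd U e4 G y" using FG[OF y] i4[OF y] by auto
  have a': "dth (\<lambda>(t', r', th', ph'). complex_of_real (sin th') * dth F (t', r', th', ph')) y = pd U e3 (\<lambda>z. Sn z * pd U e3 G z) y"
    unfolding inner using a by (simp add: dth_def)
  show ?thesis
    using a'[unfolded yy] b c unfolding angL_def AngP_def dph_def Sn_def Cs_def ISn_def yy
    by (simp add: cot_def power2_eq_square divide_inverse)
qed

lemma WaUa: assumes y: "y \<in> U" shows "Wa M k y * Ua M k y = 1" "Ua M k y * Wa M k y = 1"
  using w_pos[OF y] unfolding Wa_def Ua_def by (simp_all add: of_real_mult[symmetric] del: of_real_mult)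

lemma tr_RW:
  assumes y: "y \<in> U"
  shows "RW M k s \<Psi> y = - LP (LbP \<Psi>) y - Wa M k y * (AngP s \<Psi> y - 6 * of_real M * IRf y * \<Psi> y)"
proof -
  have a: "Lop M k (Lbar M k \<Psi>) y = LP (LbP \<Psi>) y"
  proof -
    have "LP (LbP \<Psi>) = LP (LbP \<Psi>)" ..
    have e: "Lbar M k \<Psi> z = LbP \<Psi> z" if "z \<in> U" for z using tr_Lop(2)[OF _ that, of \<Psi> \<Psi>] by simp
    show ?thesis by (rule tr_Lop(1)[OF e y])
  qed
  have b: "angL s \<Psi> y = AngP s \<Psi> y" by (rule tr_ang[OF _ y]) simp
  obtain t r th ph where yy: "y = (t, r, th, ph)" by (cases y) auto
  show ?thesis using a b unfolding RW_def Wa_def IRf_def yy by (simp add: divide_inverse)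
qed

lemma LbP_local: assumes FG: "\<And>z. z \<in> U \<Longrightarrow> F z = G z" shows "LbP F = LbP G"
proof -
  have "pd U e1 F = pd U e1 G" by (rule pd_local[OF openU FG])
  moreover have "pd U e2 F = pd U e2 G" by (rule pd_local[OF openU FG])
  ultimately
  show ?thesis unfolding LbP_def by simp
qed
lemma LP_local: assumes FG: "\<And>z. z \<in> U \<Longrightarrow> F z = G z" shows "LP F = LP G"
proof -
  have "pd U e1 F = pd U e1 G" by (rule pd_local[OF openU FG])
  moreover have "pd U e2 F = pd U e2 G" by (rule pd_local[OF openU FG])
  ultimately
  show ?thesis unfolding LP_def by simp
qed
lemma AngP_local: "(\<And>z. z \<in> U \<Longrightarrow> F z = G z) \<Longrightarrow> y \<in> U \<Longrightarrow> AngP s F y = AngP s G y"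
proof -
  assume FG: "\<And>z. z \<in> U \<Longrightarrow> F z = G z" and y: "y \<in> U"
  have "pd U e3 F = pd U e3 G" "pd U e4 F = pd U e4 G" using pd_local[OF openU FG] by auto
  then show ?thesis unfolding AngP_def using FG[OF y] by simp
qed

lemma main:
  assumes sm: "smooth_on U \<Psi>" and eq: "\<And>x. x \<in> U \<Longrightarrow> RW M k s \<Psi> x = 0" and x: "x \<in> U"
  shows "winvLbar M k (winvLbar M k (mul_r (\<lambda>r. (w M k r)^2) (winvL M k (winvL M k \<Psi>)))) x
        = angL s (\<lambda>y. angL s \<Psi> y - 2 * \<Psi> y) x - of_real (12 * M) * dt \<Psi> x
    \<and> winvL M k (winvL M k (mul_r (\<lambda>r. (w M k r)^2) (winvLbar M k (winvLbar M k \<Psi>)))) x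
        = angL s (\<lambda>y. angL s \<Psi> y - 2 * \<Psi> y) x + of_real (12 * M) * dt \<Psi> x"
proof -
  have phi: "AngP s \<Psi> y = Phi0 \<Psi> y" if y: "y \<in> U" for y
  proof -
    have h: "- LP (LbP \<Psi>) y - Wa M k y * (AngP s \<Psi> y - 6 * of_real M * IRf y * \<Psi> y) = 0"
      using eq[OF y] tr_RW[OF y] by simp
    have h2: "- LP (LbP \<Psi>) y = Wa M k y * (AngP s \<Psi> y - 6 * of_real M * IRf y * \<Psi> y)"
      using h unfolding diff_eq_eq by simp
    have h3: "AngP s \<Psi> y - 6 * of_real M * IRf y * \<Psi> y = Ua M k y * (- LP (LbP \<Psi>) y)"
      unfolding h2 by (simp add: mult.assoc[symmetric] WaUa[OF y])
    then show ?thesis unfolding Phi0_def by (simp add: algebra_simps)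
  qed
  have RHS: "angL s (\<lambda>y. angL s \<Psi> y - 2 * \<Psi> y) x
      = (6 * of_real M * IRf x - 2) * Phi0 \<Psi> x - Ua M k x * LP (LbP (Phi0 \<Psi>)) x"
  proof -
    have ang0: "angL s \<Psi> z = AngP s \<Psi> z" if "z \<in> U" for z by (rule tr_ang[OF _ that]) simp
    have "angL s (\<lambda>y. angL s \<Psi> y - 2 * \<Psi> y) x = AngP s (\<lambda>y. AngP s \<Psi> y - 2 * \<Psi> y) x"
      by (rule tr_ang[OF _ x]) (simp add: ang0)
    also have "\<dots> = AngP s (\<lambda>y. Phi0 \<Psi> y - 2 * \<Psi> y) x"
      by (rule AngP_local[OF _ x]) (simp add: phi)
    also have "\<dots> = (6 * of_real M * IRf x - 2) * AngP s \<Psi> x - Ua M k x * LP (LbP (AngP s \<Psi>)) x"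
      by (rule test3[OF sm x])
    also have "LbP (AngP s \<Psi>) = LbP (Phi0 \<Psi>)" by (rule LbP_local) (rule phi)
    finally show ?thesis using phi[OF x] by simp
  qed
  have dt: "dt \<Psi> x = pd U e1 \<Psi> x" unfolding dt_def pd_def using x by simp
  have L1: "winvLbar M k (winvLbar M k (mul_r (\<lambda>r. (w M k r)^2) (winvL M k (winvL M k \<Psi>)))) x
      = wLb (wLb (\<lambda>y. Wa M k y * Wa M k y * wL (wL \<Psi>) y)) x"
  proof -
    have s1: "winvL M k \<Psi> z = wL \<Psi> z" if "z \<in> U" for z by (rule tr_wL(1)[OF _ that]) simp
    have s2: "winvL M k (winvL M k \<Psi>) z = wL (wL \<Psi>) z" if "z \<in> U" for z by (rule tr_wL(1)[OF s1 that])
    have s3: "mul_r (\<lambda>r. (w M k r)^2) (winvL M k (winvL M k \<Psi>)) z = Wa M k z * Wa M k z * wL (wL \<Psi>) z" if "z \<in> U" for z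
      using s2[OF that] tr_W2 by simp
    have s4: "winvLbar M k (mul_r (\<lambda>r. (w M k r)^2) (winvL M k (winvL M k \<Psi>))) z = wLb (\<lambda>y. Wa M k y * Wa M k y * wL (wL \<Psi>) y) z" if "z \<in> U" for z
      by (rule tr_wL(2)[OF s3 that])
    show ?thesis by (rule tr_wL(2)[OF s4 x])
  qed
  have L2: "winvL M k (winvL M k (mul_r (\<lambda>r. (w M k r)^2) (winvLbar M k (winvLbar M k \<Psi>)))) x
      = wL (wL (\<lambda>y. Wa M k y * Wa M k y * wLb (wLb \<Psi>) y)) x"
  proof -
    have s1: "winvLbar M k \<Psi> z = wLb \<Psi> z" if "z \<in> U" for z by (rule tr_wL(2)[OF _ that]) simp
    have s2: "winvLbar M k (winvLbar M k \<Psi>) z = wLb (wLb \<Psi>) z" if "z \<in> U" for z by (rule tr_wL(2)[OF s1 that])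
    have s3: "mul_r (\<lambda>r. (w M k r)^2) (winvLbar M k (winvLbar M k \<Psi>)) z = Wa M k z * Wa M k z * wLb (wLb \<Psi>) z" if "z \<in> U" for z
      using s2[OF that] tr_W2 by simp
    have s4: "winvL M k (mul_r (\<lambda>r. (w M k r)^2) (winvLbar M k (winvLbar M k \<Psi>))) z = wL (\<lambda>y. Wa M k y * Wa M k y * wLb (wLb \<Psi>) y) z" if "z \<in> U" for z
      by (rule tr_wL(1)[OF s3 that])
    show ?thesis by (rule tr_wL(1)[OF s4 x])
  qed
  show ?thesis
    unfolding L1 L2 RHS test[OF sm x] test2[OF sm x] dt by simp
qed

end


theorem lemma2p10:
  fixes M k :: real and s :: int and \<Psi> :: "point \<Rightarrow> complex"
  assumes "M > 0" and "k > 0"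
    and "s = 2 \<or> s = -2"
    and "smooth_on (exterior M k) \<Psi>"
    and "\<And>t r th ph. \<Psi> (t, r, th, ph + 2 * pi) = \<Psi> (t, r, th, ph)"
    and "\<And>x. x \<in> exterior M k \<Longrightarrow> RW M k s \<Psi> x = 0"
  shows "\<forall>x \<in> exterior M k.
      winvLbar M k (winvLbar M k (mul_r (\<lambda>r. (w M k r)^2) (winvL M k (winvL M k \<Psi>)))) x
        = angL s (\<lambda>y. angL s \<Psi> y - 2 * \<Psi> y) x - of_real (12 * M) * dt \<Psi> x
    \<and> winvL M k (winvL M k (mul_r (\<lambda>r. (w M k r)^2) (winvLbar M k (winvLbar M k \<Psi>)))) x
        = angL s (\<lambda>y. angL s \<Psi> y - 2 * \<Psi> y) x + of_real (12 * M) * dt \<Psi> x"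
proof -
  interpret sads M k by unfold_locales (use assms in auto)
  show ?thesis using main[OF assms(4) assms(6)] by blast
qed

end
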